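(* Let $(P_n)_{n\geq 0}$ be the Pell sequence: $P_0=0$, $P_1=1$, $P_{n+1}=2P_n+P_{n-1}$ for $n\geq 1$. Let $k,l,m,n$ be positive integers. Then $P_k+2P_l=P_m+2P_n$ if and only if $k=m$ and $l=n$. *)

theory Defs
  imports Main
begin

fun pell :: "nat \<Rightarrow> nat" where
  "pell 0 = 0"
| "pell (Suc 0) = 1"
| "pell (Suc (Suc n)) = 2 * pell (Suc n) + pell n"

end

theory Submission
  imports Defs
begin

lemma pell_pos: "n > 0 \<Longrightarrow> pell n > 0"
proof (induction n rule: pell.induct)
  case (3 n) then show ?case by (cases n) auto
qed auto

lemma pell_step: "n > 0 \<Longrightarrow> pell n < pell (Suc n)"
proof (cases n)
  case (Suc j) assume "n > 0"
  then show ?thesis using Suc pell_pos[of n] by (cases j) auto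
qed auto

lemma pell_mono_step: "pell n \<le> pell (Suc n)"
  by (cases n) (auto simp: less_imp_le pell_step)

lemma pell_mono: "a \<le> b \<Longrightarrow> pell a \<le> pell b"
  by (induction b) (auto simp: le_Suc_eq intro: order_trans[OF _ pell_mono_step])

lemma pell_strict: "0 < a \<Longrightarrow> a < b \<Longrightarrow> pell a < pell b"
proof (induction b)
  case (Suc b)
  then show ?case using pell_step[of b] by (cases "a = b") auto
qed auto

lemma pell_inj: "0 < a \<Longrightarrow> 0 < b \<Longrightarrow> pell a = pell b \<Longrightarrow> a = b"
  by (metis linorder_neq_iff pell_strict less_irrefl)

lemma pell_parity: "even (pell n) \<longleftrightarrow> even n"
  by (induction n rule: pell.induct) auto

lemma key:
  assumes "k > 0" "l > 0" "m > 0" "n > 0" "m < k"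
    and eq: "pell k + 2 * pell l = pell m + 2 * pell n"
  shows False
proof -
  have "pell m < pell k" using pell_strict assms by blast
  then have "pell l < pell n" using eq by linarith
  then have ln: "l < n" using pell_mono by (metis not_le leD)
  show False
  proof (cases "n < k")
    case True
    define j where "j = k - 2"
    have "even (pell k) = even (pell m)" using eq by presburger
    then have "even k = even m" by (simp add: pell_parity)
    then have mk: "m \<noteq> k - 1" using assms by (metis One_nat_def Suc_pred even_Suc)
    have kj: "k = Suc (Suc j)" using assms unfolding j_def by arith
    have "pell n \<le> pell (Suc j)" using True kj by (intro pell_mono) simp
    moreover have "pell m \<le> pell j" using assms kj mk by (intro pell_mono) simp
    ultimately have "pell m + 2 * pell n \<le> pell k" using kj by simp
    moreover have "pell l > 0" using pell_pos assms by simp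
    ultimately show False using eq by linarith
  next
    case False
    define j where "j = n - 2"
    have nj: "n = Suc (Suc j)" using ln assms unfolding j_def by arith
    have "pell l \<le> pell (Suc j)" using ln nj by (intro pell_mono) simp
    moreover have "pell k \<le> pell n" using False by (intro pell_mono) simp
    ultimately have "pell k + 2 * pell l \<le> 2 * pell n" using nj by simp
    moreover have "pell m > 0" using pell_pos assms by simp
    ultimately show False using eq by linarith
  qed
qed

theorem corollary1p1:
  fixes k l m n :: nat
  assumes "k > 0" and "l > 0" and "m > 0" and "n > 0"
  shows "pell k + 2 * pell l = pell m + 2 * pell n \<longleftrightarrow> k = m \<and> l = n"
proof
  assume eq: "pell k + 2 * pell l = pell m + 2 * pell n"
  have "k = m"
  proof (rule ccontr)
    assume "k \<noteq> m"
    then consider "m < k" | "k < m" by linarith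
    then show False
    proof cases
      case 1 show ?thesis by (rule key[OF assms 1 eq])
    next
      case 2 then show ?thesis using key[of m n k l] assms eq by simp
    qed
  qed
  moreover then have "pell l = pell n" using eq by simp
  ultimately show "k = m \<and> l = n" using pell_inj assms by blast
qed simp

end
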